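(* Let $\varphi:U\times U\to V$ be a fully-regular alternating bilinear map and $\mathcal{S}_\varphi:=\{\varphi(x,-)\mid x\in U\}\subseteq\mathcal{L}(U,V)$. If $\#\mathbb{K}>\mathrm{urk}(\mathcal{S}_\varphi)$, then $\mathcal{S}_\varphi$ is semi-primitive.
   Context: $U,V$ finite-dimensional over a field $\mathbb{K}$. $\varphi$ is fully-regular if $V$ is spanned by its values and $\varphi(x,-)\ne0$ for all nonzero $x$. $\mathrm{urk}$ is the maximal rank of an operator in the space. For an operator space $\mathcal{T}\subseteq\mathcal{L}(U,V)$: reduced means $\bigcap_f\ker f=\{0\}$ and $\sum_f\mathrm{im} f=V$; $c$-defective means $\dim\ker f\geq c$ for all $f\in\mathcal{T}$; the defectiveness index is the greatest such $c$; $\mathcal{T}$ is semi-primitive if it is reduced and there is no linear hyperplane $U'$ of $U$ such that $\{f_{|U'}\mid f\in\mathcal{T}\}$ is $c$-defective, $c$ being the defectiveness index of $\mathcal{T}$. *)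

theory Defs
  imports "HOL-Analysis.Analysis"
begin

text \<open>Finite-dimensional vector spaces over a field 'k are modelled as types 'u, 'v
  with scalar multiplications sU, sV (locale vector_space of HOL); the whole
  type is the space.\<close>

definition fin_dim_vs :: "('k::field \<Rightarrow> 'u::ab_group_add \<Rightarrow> 'u) \<Rightarrow> bool" where
  "fin_dim_vs s \<longleftrightarrow> (\<exists>B. finite_dimensional_vector_space s B)"

definition bilinear_map ::
  "('k::field \<Rightarrow> 'u::ab_group_add \<Rightarrow> 'u) \<Rightarrow> ('k \<Rightarrow> 'v::ab_group_add \<Rightarrow> 'v)
   \<Rightarrow> ('u \<Rightarrow> 'u \<Rightarrow> 'v) \<Rightarrow> bool" where
  "bilinear_map sU sV \<phi> \<longleftrightarrow>
     (\<forall>x. Vector_Spaces.linear sU sV (\<phi> x)) \<and> (\<forall>y. Vector_Spaces.linear sU sV (\<lambda>x. \<phi> x y))"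

definition alternating_map :: "('u \<Rightarrow> 'u \<Rightarrow> 'v::zero) \<Rightarrow> bool" where
  "alternating_map \<phi> \<longleftrightarrow> (\<forall>x. \<phi> x x = 0)"

definition fully_regular ::
  "('k::field \<Rightarrow> 'v::ab_group_add \<Rightarrow> 'v) \<Rightarrow> ('u::zero \<Rightarrow> 'u \<Rightarrow> 'v) \<Rightarrow> bool" where
  "fully_regular sV \<phi> \<longleftrightarrow>
     module.span sV {\<phi> x y | x y. True} = UNIV \<and> (\<forall>x. x \<noteq> 0 \<longrightarrow> \<phi> x \<noteq> (\<lambda>_. 0))"

definition op_space_of :: "('u \<Rightarrow> 'u \<Rightarrow> 'v) \<Rightarrow> ('u \<Rightarrow> 'v) set" where
  "op_space_of \<phi> = {\<phi> x | x. True}"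

definition op_rank ::
  "('k::field \<Rightarrow> 'v::ab_group_add \<Rightarrow> 'v) \<Rightarrow> ('u \<Rightarrow> 'v) \<Rightarrow> nat" where
  "op_rank sV f = vector_space.dim sV (range f)"

definition urk ::
  "('k::field \<Rightarrow> 'v::ab_group_add \<Rightarrow> 'v) \<Rightarrow> ('u \<Rightarrow> 'v) set \<Rightarrow> nat" where
  "urk sV T = Max (op_rank sV ` T)"

definition reduced ::
  "('k::field \<Rightarrow> 'v::ab_group_add \<Rightarrow> 'v) \<Rightarrow> ('u::zero \<Rightarrow> 'v) set \<Rightarrow> bool" where
  "reduced sV T \<longleftrightarrow>
     (\<Inter>f\<in>T. {x. f x = 0}) = {0} \<and> module.span sV (\<Union>f\<in>T. range f) = UNIV"

definition c_defective ::
  "('k::field \<Rightarrow> 'u::ab_group_add \<Rightarrow> 'u) \<Rightarrow> ('u \<Rightarrow> 'v::zero) set \<Rightarrow> nat \<Rightarrow> bool" where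
  "c_defective sU T c \<longleftrightarrow> (\<forall>f\<in>T. c \<le> vector_space.dim sU {x. f x = 0})"

text \<open>{f restricted to U' | f in T} is c-defective: the kernel of the restriction
  f|U' : U' \<rightarrow> V is ker f \<inter> U'.\<close>
definition restr_c_defective ::
  "('k::field \<Rightarrow> 'u::ab_group_add \<Rightarrow> 'u) \<Rightarrow> 'u set \<Rightarrow> ('u \<Rightarrow> 'v::zero) set \<Rightarrow> nat \<Rightarrow> bool" where
  "restr_c_defective sU U' T c \<longleftrightarrow> (\<forall>f\<in>T. c \<le> vector_space.dim sU {x \<in> U'. f x = 0})"

definition defectiveness_index ::
  "('k::field \<Rightarrow> 'u::ab_group_add \<Rightarrow> 'u) \<Rightarrow> ('u \<Rightarrow> 'v::zero) set \<Rightarrow> nat" where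
  "defectiveness_index sU T = (GREATEST c. c_defective sU T c)"

definition linear_hyperplane :: "('k::field \<Rightarrow> 'u::ab_group_add \<Rightarrow> 'u) \<Rightarrow> 'u set \<Rightarrow> bool" where
  "linear_hyperplane sU H \<longleftrightarrow>
     module.subspace sU H \<and> vector_space.dim sU H + 1 = vector_space.dim sU (UNIV :: 'u set)"

definition semi_primitive ::
  "('k::field \<Rightarrow> 'u::ab_group_add \<Rightarrow> 'u) \<Rightarrow> ('k \<Rightarrow> 'v::ab_group_add \<Rightarrow> 'v)
   \<Rightarrow> ('u \<Rightarrow> 'v) set \<Rightarrow> bool" where
  "semi_primitive sU sV T \<longleftrightarrow>
     reduced sV T \<and>
     \<not> (\<exists>H. linear_hyperplane sU H \<and> restr_c_defective sU H T (defectiveness_index sU T))"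

end

theory Submission
  imports Defs
begin


context vector_space begin
lemma eig_indep:
  assumes lin: "Vector_Spaces.linear scale scale T" and fin: "finite S"
  shows "(\<forall>w\<in>S. w \<noteq> 0 \<and> T w = e w *s w) \<Longrightarrow> inj_on e S \<Longrightarrow> independent S"
  using fin
proof (induction S rule: finite_induct)
  case empty then show ?case by (simp add: independent_empty)
next
  case (insert x S)
  interpret lT: Vector_Spaces.linear scale scale T by (rule lin)
  have indS: "independent S" using insert by (auto simp: inj_on_insert)
  have "x \<notin> span S"
  proof
    assume "x \<in> span S"
    then obtain c where xc: "x = (\<Sum>w\<in>S. c w *s w)"
      using span_finite[OF insert.hyps(1)] by auto
    have "T x = (\<Sum>w\<in>S. c w *s T w)"
      unfolding xc by (simp only: lT.sum lT.scale)
    also have "\<dots> = (\<Sum>w\<in>S. (c w * e w) *s w)"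
      using insert.prems(1) by (intro sum.cong) auto
    finally have 1: "T x = (\<Sum>w\<in>S. (c w * e w) *s w)" .
    have 2: "T x = (\<Sum>w\<in>S. (e x * c w) *s w)"
      using insert.prems(1) xc by (simp add: scale_sum_right)
    have z: "(\<Sum>w\<in>S. (c w * e w - e x * c w) *s w) = 0"
      using 1 2 by (simp add: scale_left_diff_distrib sum_subtractf)
    have "\<forall>w\<in>S. c w * e w - e x * c w = 0"
    proof (rule ccontr)
      assume "\<not> (\<forall>w\<in>S. c w * e w - e x * c w = 0)"
      with z have "dependent S"
        unfolding local.dependent_finite[OF insert.hyps(1)]
        by (intro exI[of _ "\<lambda>w. c w * e w - e x * c w"]) auto
      then show False using indS by simp
    qed
    moreover have "\<forall>w\<in>S. e w \<noteq> e x" using insert.prems(2) insert.hyps(2)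
      by (auto simp: inj_on_def)
    ultimately have "\<forall>w\<in>S. c w = 0"
      by (metis mult.commute right_diff_distrib' mult_eq_0_iff eq_iff_diff_eq_0)
    then have "x = 0" using xc by simp
    then show False using insert.prems(1) by simp
  qed
  then show ?case using indS by (simp add: independent_insertI)
qed
end

lemma pencil:
  fixes sU :: "'k::field \<Rightarrow> 'u::ab_group_add \<Rightarrow> 'u" and sV :: "'k \<Rightarrow> 'v::ab_group_add \<Rightarrow> 'v"
  assumes fU: "finite_dimensional_vector_space sU BU"
    and fV: "finite_dimensional_vector_space sV BV"
    and lf: "Vector_Spaces.linear sU sV f" and lg: "Vector_Spaces.linear sU sV g"
    and finA: "finite A"
    and big: "\<forall>a\<in>A. vector_space.dim sU {x. f x = 0} < vector_space.dim sU {x. sV a (f x) + g x = 0}"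
  shows "card A \<le> vector_space.dim sV (range f)"
proof -
  interpret U: finite_dimensional_vector_space sU BU by fact
  interpret V: finite_dimensional_vector_space sV BV by fact
  interpret UV: finite_dimensional_vector_space_pair_1 sU BU sV by unfold_locales
  interpret VV: finite_dimensional_vector_space_pair_1 sV BV sV by unfold_locales
  interpret UU: finite_dimensional_vector_space_pair_1 sU BU sU by unfold_locales
  define R where "R = range f"
  have subR: "V.subspace R"
    unfolding R_def by (rule UV.linear_subspace_image[OF lf U.subspace_UNIV])
  obtain h where lh: "Vector_Spaces.linear sV sU h" and fh: "\<forall>v\<in>R. f (h v) = v"
    using UV.linear_exists_right_inverse_on[OF lf U.subspace_UNIV] unfolding R_def by auto
  have lid: "Vector_Spaces.linear sV sV (\<lambda>x. x)" by (rule V.linear_ident)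
  obtain P where PR: "range P \<subseteq> R" and lP: "Vector_Spaces.linear sV sV P"
      and Pid: "\<forall>v\<in>R. P v = v"
    using VV.linear_exists_left_inverse_on[OF lid subR] by auto
  define T where "T = (\<lambda>v. P (g (h v)))"
  have lT: "Vector_Spaces.linear sV sV T"
    unfolding T_def
    using Vector_Spaces.linear_compose[OF Vector_Spaces.linear_compose[OF lh lg] lP]
    by (simp add: o_def)
  interpret lf: Vector_Spaces.linear sU sV f by fact
  interpret lg: Vector_Spaces.linear sU sV g by fact
  interpret lh: Vector_Spaces.linear sV sU h by fact
  interpret lP: Vector_Spaces.linear sV sV P by fact
  have eig: "\<forall>a\<in>A. \<exists>v. v \<in> R \<and> v \<noteq> 0 \<and> T v = sV (-a) v"
  proof
    fix a assume aA: "a \<in> A"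
    show "\<exists>v. v \<in> R \<and> v \<noteq> 0 \<and> T v = sV (-a) v"
    proof (rule ccontr)
      assume no: "\<not> (\<exists>v. v \<in> R \<and> v \<noteq> 0 \<and> T v = sV (-a) v)"
      define K where "K = {x. sV a (f x) + g x = 0}"
      define q where "q = (\<lambda>u. u - h (f u))"
      have lq: "Vector_Spaces.linear sU sU q"
        unfolding q_def
        using UU.linear_compose_sub[OF U.linear_ident Vector_Spaces.linear_compose[OF lf lh]]
        by (simp add: o_def)
      have lF: "Vector_Spaces.linear sU sV (\<lambda>x. sV a (f x) + g x)"
        by (intro UV.linear_compose_add UV.linear_compose_scale_right lf lg)
      have subK: "U.subspace K" unfolding K_def by (rule UV.linear_subspace_kernel[OF lF])
      have inj: "inj_on q K"
        unfolding UU.linear_inj_on_iff_eq_0[OF lq subK]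
      proof (intro ballI impI)
        fix x assume xK: "x \<in> K" and q0: "q x = 0"
        have xh: "x = h (f x)" using q0 unfolding q_def by simp
        have vR: "f x \<in> R" unfolding R_def by simp
        have "P (sV a (f x) + g x) = 0" using xK unfolding K_def by simp
        then have "sV a (P (f x)) + P (g (h (f x))) = 0"
          using xh lP.add lP.scale by metis
        then have "sV a (f x) + T (f x) = 0" using Pid vR unfolding T_def by simp
        then have "T (f x) = sV (-a) (f x)"
          by (metis V.scale_minus_left add.commute add_eq_0_iff)
        then have "f x = 0" using no vR by blast
        then show "x = 0" using xh lh.zero by simp
      qed
      have "q ` K \<subseteq> {x. f x = 0}"
        unfolding q_def using fh R_def by (auto simp: lf.diff)
      then have "U.dim (q ` K) \<le> U.dim {x. f x = 0}" by (rule U.dim_subset)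
      moreover have "U.dim (q ` K) = U.dim K"
        by (rule UU.dim_image_eq[OF lq]) (simp add: U.span_eq_iff[THEN iffD2, OF subK] inj)
      ultimately show False using big aA unfolding K_def by force
    qed
  qed
  then obtain v where v: "\<forall>a\<in>A. v a \<in> R \<and> v a \<noteq> 0 \<and> T (v a) = sV (-a) (v a)"
    by metis
  have injv: "inj_on v A"
  proof (rule inj_onI)
    fix a b assume "a \<in> A" "b \<in> A" "v a = v b"
    then have "sV (-a) (v a) = sV (-b) (v a)" "v a \<noteq> 0" using v by metis+
    then show "a = b" by simp
  qed
  define e where "e = (\<lambda>w. - inv_into A v w)"
  have ev: "\<And>a. a \<in> A \<Longrightarrow> e (v a) = - a" unfolding e_def using injv by simp
  have "V.independent (v ` A)"
  proof (rule V.eig_indep[OF lT])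
    show "finite (v ` A)" using finA by simp
    show "\<forall>w\<in>v ` A. w \<noteq> 0 \<and> T w = sV (e w) w" using v ev by auto
    show "inj_on e (v ` A)" by (rule inj_onI) (auto simp: ev)
  qed
  moreover have "v ` A \<subseteq> R" using v by auto
  ultimately have "card (v ` A) \<le> V.dim R" by (rule V.independent_card_le_dim[rotated])
  then show ?thesis using card_image[OF injv] R_def by simp
qed


theorem mainTheorem17:
  fixes sU :: "'k::field \<Rightarrow> 'u::ab_group_add \<Rightarrow> 'u"
    and sV :: "'k \<Rightarrow> 'v::ab_group_add \<Rightarrow> 'v"
    and \<phi> :: "'u \<Rightarrow> 'u \<Rightarrow> 'v"
  assumes "vector_space sU" and "vector_space sV"
    and "fin_dim_vs sU" and "fin_dim_vs sV"
    and "bilinear_map sU sV \<phi>"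
    and "alternating_map \<phi>"
    and "fully_regular sV \<phi>"
    and "infinite (UNIV :: 'k set) \<or> urk sV (op_space_of \<phi>) < card (UNIV :: 'k set)"
  shows "semi_primitive sU sV (op_space_of \<phi>)"
proof -
  obtain BU where fU: "finite_dimensional_vector_space sU BU"
    using assms(3) unfolding fin_dim_vs_def by auto
  obtain BV where fV: "finite_dimensional_vector_space sV BV"
    using assms(4) unfolding fin_dim_vs_def by auto
  interpret U: finite_dimensional_vector_space sU BU by fact
  interpret V: finite_dimensional_vector_space sV BV by fact
  interpret UV: finite_dimensional_vector_space_pair_1 sU BU sV by unfold_locales
  have lin1: "\<And>x. Vector_Spaces.linear sU sV (\<phi> x)"
    using assms(5) unfolding bilinear_map_def by auto
  have lin2: "\<And>y. Vector_Spaces.linear sU sV (\<lambda>x. \<phi> x y)"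
    using assms(5) unfolding bilinear_map_def by auto
  have add1: "\<And>x y z. \<phi> (x + y) z = \<phi> x z + \<phi> y z"
    subgoal for x y z using UV.linear_add[OF lin2[of z], of x y] by simp done
  have add2: "\<And>x y z. \<phi> z (x + y) = \<phi> z x + \<phi> z y"
    subgoal for x y z using UV.linear_add[OF lin1[of z], of x y] by simp done
  have alt: "\<And>x. \<phi> x x = 0" using assms(6) unfolding alternating_map_def by auto
  have anti: "\<And>x y. \<phi> y x = - \<phi> x y"
  proof -
    fix x y
    have e: "\<phi> (x + y) (x + y) = \<phi> x x + \<phi> x y + (\<phi> y x + \<phi> y y)"
      by (simp only: add1 add2 add_ac)
    have "0 = \<phi> x y + \<phi> y x" using e alt[of "x+y"] alt[of x] alt[of y] by simp
    then show "\<phi> y x = - \<phi> x y" by (simp add: eq_neg_iff_add_eq_0 add.commute)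
  qed
  have fr1: "module.span sV {\<phi> x y | x y. True} = UNIV"
    and fr2: "\<And>x. x \<noteq> 0 \<Longrightarrow> \<phi> x \<noteq> (\<lambda>_. 0)"
    using assms(7) unfolding fully_regular_def by auto
  define S where "S = op_space_of \<phi>"
  have S_eq: "S = {\<phi> x | x. True}" unfolding S_def op_space_of_def by simp
  have red: "reduced sV S"
    unfolding reduced_def
  proof
    show "(\<Inter>f\<in>S. {x. f x = 0}) = {0}"
    proof
      show "(\<Inter>f\<in>S. {x. f x = 0}) \<subseteq> {0}"
      proof
        fix y assume "y \<in> (\<Inter>f\<in>S. {x. f x = 0})"
        then have "\<forall>x. \<phi> x y = 0" unfolding S_eq by auto
        then have "\<phi> y = (\<lambda>_. 0)"
          by (intro ext) (metis anti neg_equal_0_iff_equal)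
        then show "y \<in> {0}" using fr2 by blast
      qed
      show "{0} \<subseteq> (\<Inter>f\<in>S. {x. f x = 0})"
        unfolding S_eq using UV.linear_0[OF lin1] by auto
    qed
    have "(\<Union>f\<in>S. range f) = {\<phi> x y | x y. True}" unfolding S_eq by auto
    then show "module.span sV (\<Union>f\<in>S. range f) = UNIV" using fr1 by simp
  qed
  define k where "k = (\<lambda>x. U.dim {z. \<phi> x z = 0})"
  obtain x0 where x0: "\<And>x. k x0 \<le> k x"
    using ex_has_least_nat[of "\<lambda>_. True" 0 k] by auto
  have cdef: "defectiveness_index sU S = k x0"
    unfolding defectiveness_index_def
  proof (rule Greatest_equality)
    show "c_defective sU S (k x0)"
      unfolding c_defective_def S_eq k_def using x0[unfolded k_def] by auto
    show "\<And>y. c_defective sU S y \<Longrightarrow> y \<le> k x0"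
      unfolding c_defective_def S_eq k_def by auto
  qed
  have "\<not> (\<exists>H. linear_hyperplane sU H \<and> restr_c_defective sU H S (defectiveness_index sU S))"
  proof
    assume "\<exists>H. linear_hyperplane sU H \<and> restr_c_defective sU H S (defectiveness_index sU S)"
    then obtain H where subH: "U.subspace H" and dimH: "U.dim H + 1 = U.dim (UNIV :: 'u set)"
      and rH: "\<forall>x. k x0 \<le> U.dim {z \<in> H. \<phi> x z = 0}"
      unfolding linear_hyperplane_def restr_c_defective_def cdef unfolding S_eq by auto
    have inH: "x \<in> H" if kx: "k x = k x0" for x
    proof -
      have sub1: "U.subspace {z \<in> H. \<phi> x z = 0}"
        using U.subspace_inter[OF subH UV.linear_subspace_kernel[OF lin1[of x]]]
        by (simp add: Int_def)
      have "{z \<in> H. \<phi> x z = 0} = {z. \<phi> x z = 0}"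
        by (rule U.subspace_dim_equal[OF sub1 UV.linear_subspace_kernel[OF lin1[of x]]])
          (use rH kx k_def in auto)
      then show "x \<in> H" using alt by blast
    qed
    obtain y where yH: "y \<notin> H"
    proof -
      have "H \<noteq> UNIV" using dimH by auto
      then show ?thesis using that by auto
    qed
    have x0H: "x0 \<in> H" using inH by simp
    define f where "f = \<phi> x0"
    define g where "g = \<phi> y"
    have big: "\<forall>a. U.dim {x. f x = 0} < U.dim {x. sV a (f x) + g x = 0}"
    proof
      fix a
      have "sU a x0 + y \<notin> H"
      proof
        assume "sU a x0 + y \<in> H"
        then have "(sU a x0 + y) - sU a x0 \<in> H"
          using U.subspace_diff[OF subH] U.subspace_scale[OF subH x0H] by blast
        then show False using yH by simp
      qed
      then have "k (sU a x0 + y) \<noteq> k x0" using inH by blast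
      then have "k x0 < k (sU a x0 + y)" using x0[of "sU a x0 + y"] by linarith
      moreover have "\<phi> (sU a x0 + y) = (\<lambda>z. sV a (f z) + g z)"
        unfolding f_def g_def
      proof (rule ext)
        fix z
        show "\<phi> (sU a x0 + y) z = sV a (\<phi> x0 z) + \<phi> y z"
          using UV.linear_add[OF lin2[of z], of "sU a x0" y]
            UV.linear_scale[OF lin2[of z], of a x0] by simp
      qed
      ultimately show "U.dim {x. f x = 0} < U.dim {x. sV a (f x) + g x = 0}"
        unfolding k_def f_def by simp
    qed
    define r where "r = urk sV S"
    have fin: "finite (op_rank sV ` S)"
    proof (rule finite_subset)
      show "op_rank sV ` S \<subseteq> {..V.dimension}"
        unfolding op_rank_def using V.dim_subset_UNIV by auto
    qed simp
    have "op_rank sV f \<le> r"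
      unfolding r_def urk_def using fin by (rule Max_ge) (auto simp: S_eq f_def)
    obtain A :: "'k set" where finA: "finite A" and cA: "card A = Suc r"
    proof (cases "finite (UNIV :: 'k set)")
      case True
      then have "Suc r \<le> card (UNIV :: 'k set)" using assms(8) r_def S_def by auto
      then obtain T :: "'k set" where "card T = Suc r" "finite T"
        by (rule obtain_subset_with_card_n)
      then show ?thesis by (rule that[rotated])
    next
      case False
      then obtain T :: "'k set" where "finite T" "card T = Suc r"
        using infinite_arbitrarily_large[of UNIV "Suc r"] by blast
      then show ?thesis by (rule that)
    qed
    have "card A \<le> V.dim (range f)"
      using pencil[OF fU fV lin1[of x0, folded f_def] lin1[of y, folded g_def] finA] big by blast
    then show False using cA \<open>op_rank sV f \<le> r\<close> unfolding op_rank_def by simp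
  qed
  then show ?thesis using red unfolding semi_primitive_def S_def by simp
qed

end
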